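(* Let $\tau:\mathcal{D}_{\mathbf{V}_L}\to\mathcal{D}_{\mathbf{V}_H}$ be a constructive abstraction function over clusterings $\mathbb{C}$ and $\mathbb{D}$. For every intervention $\mathbf{X}_H\leftarrow\mathbf{x}_H$ with $\mathbf{X}_H\subseteq\mathbf{V}_H$ and $\mathbf{x}_H\in\mathcal{D}_{\mathbf{X}_H}$, there exist $\mathbf{X}_L$ that is a union of clusters of $\mathbb{C}$ and a value $\mathbf{x}_L\in\mathcal{D}_{\mathbf{X}_L}$ such that $\omega_\tau(\mathbf{X}_L\leftarrow\mathbf{x}_L)=(\mathbf{X}_H\leftarrow\mathbf{x}_H)$.
   Context: $\mathcal{D}_{\mathbf{X}}$ denotes the (Cartesian product) domain of a set of variables $\mathbf{X}$. An intervariable clustering of $\mathbf{V}_L$ is a set $\mathbb{C}=\{\mathbf{C}_1,\dots,\mathbf{C}_n\}$ forming a partition of a subset of $\mathbf{V}_L$; an intravariable clustering is $\mathbb{D}=\{\mathbb{D}_{\mathbf{C}_i}\}$ where $\mathbb{D}_{\mathbf{C}_i}=\{\mathcal{D}^1_{\mathbf{C}_i},\dots,\mathcal{D}^{m_i}_{\mathbf{C}_i}\}$ is a partition of $\mathcal{D}_{\mathbf{C}_i}$. A constructive abstraction function w.r.t. $\mathbb{C},\mathbb{D}$: $\mathbf{V}_H=\{V_{H,1},\dots,V_{H,n}\}$ in bijection with $\mathbb{C}$, $\mathcal{D}_{V_{H,i}}=\{v^1_{H,i},\dots,v^{m_i}_{H,i}\}$ in bijection with $\mathbb{D}_{\mathbf{C}_i}$,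 and $\tau(\mathbf{v}_L)=(\tau_{\mathbf{C}_i}(\mathbf{c}_i):\mathbf{C}_i\in\mathbb{C})$ with $\tau_{\mathbf{C}_i}(\mathbf{c}_i)=v^j_{H,i}$ iff $\mathbf{c}_i\in\mathcal{D}^j_{\mathbf{C}_i}$; for a union of clusters $\mathbf{W}_L$, $\tau(\mathbf{w}_L)=(\tau_{\mathbf{C}_i}(\mathbf{c}_i):\mathbf{C}_i\subseteq\mathbf{W}_L)$. For a set of variables $\mathbf{V}$ and a value $\mathbf{x}$ of $\mathbf{X}\subseteq\mathbf{V}$, $\mathrm{Rst}(\mathbf{V},\mathbf{x})=\{\mathbf{v}\in\mathcal{D}_{\mathbf{V}}:\mathbf{v}\text{ is consistent with }\mathbf{x}\}$; for $\mathbf{T}\subseteq\mathcal{D}_{\mathbf{V}_L}$, $\tau(\mathbf{T})=\{\tau(\mathbf{v}):\mathbf{v}\in\mathbf{T}\}$. The map $\omega_\tau$ is defined by $\omega_\tau(\mathbf{X}_L\leftarrow\mathbf{x}_L)=(\mathbf{X}_H\leftarrow\mathbf{x}_H)$ whenever $\tau(\mathrm{Rst}(\mathbf{V}_L,\mathbf{x}_L))=\mathrm{Rst}(\mathbf{V}_H,\mathbf{x}_H)$. *)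

theory Defs
  imports Main "HOL-Library.FuncSet" "HOL-Library.Disjoint_Sets"
begin

text \<open>Variables of type 'v with domains Dom :: 'v => 'a set. A value of a set of
variables X is an (extensional) function in PiE X Dom, so the domain D_X is PiE X Dom.\<close>

definition dom_of :: "'v set \<Rightarrow> ('v \<Rightarrow> 'a set) \<Rightarrow> ('v \<Rightarrow> 'a) set" where
  "dom_of X Dom = PiE X Dom"

definition Rst :: "'v set \<Rightarrow> ('v \<Rightarrow> 'a set) \<Rightarrow> 'v set \<Rightarrow> ('v \<Rightarrow> 'a) \<Rightarrow> ('v \<Rightarrow> 'a) set" where
  "Rst V Dom X x = {v \<in> dom_of V Dom. \<forall>a\<in>X. v a = x a}"

definition intervariable_clustering :: "'v set \<Rightarrow> 'v set set \<Rightarrow> bool" where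
  "intervariable_clustering VL CC \<longleftrightarrow> (\<exists>U. U \<subseteq> VL \<and> partition_on U CC)"

definition intravariable_clustering ::
  "('v \<Rightarrow> 'a set) \<Rightarrow> 'v set set \<Rightarrow> ('v set \<Rightarrow> ('v \<Rightarrow> 'a) set set) \<Rightarrow> bool" where
  "intravariable_clustering Dom CC DD \<longleftrightarrow> (\<forall>C\<in>CC. partition_on (dom_of C Dom) (DD C))"

text \<open>tau_C(c) = v^j_{H,i} iff c in D^j_C, where hval C is the bijection from the cells DD C
to the domain of the high-level variable hv C.\<close>
definition tau_C :: "('v set \<Rightarrow> ('v \<Rightarrow> 'a) set set) \<Rightarrow> ('v set \<Rightarrow> ('v \<Rightarrow> 'a) set \<Rightarrow> 'b)
    \<Rightarrow> 'v set \<Rightarrow> ('v \<Rightarrow> 'a) \<Rightarrow> 'b" where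
  "tau_C DD hval C c = hval C (THE D. D \<in> DD C \<and> c \<in> D)"

definition constructive_tau ::
  "'v set set \<Rightarrow> ('v set \<Rightarrow> ('v \<Rightarrow> 'a) set set) \<Rightarrow> 'h set \<Rightarrow> ('v set \<Rightarrow> 'h)
    \<Rightarrow> ('v set \<Rightarrow> ('v \<Rightarrow> 'a) set \<Rightarrow> 'b) \<Rightarrow> ('v \<Rightarrow> 'a) \<Rightarrow> ('h \<Rightarrow> 'b)" where
  "constructive_tau CC DD VH hv hval v =
     (\<lambda>h. if h \<in> VH then
            (let C = inv_into CC hv h in tau_C DD hval C (restrict v C))
          else undefined)"

definition constructive_abstraction ::
  "'v set \<Rightarrow> ('v \<Rightarrow> 'a set) \<Rightarrow> 'v set set \<Rightarrow> ('v set \<Rightarrow> ('v \<Rightarrow> 'a) set set)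
   \<Rightarrow> 'h set \<Rightarrow> ('h \<Rightarrow> 'b set) \<Rightarrow> ('v set \<Rightarrow> 'h) \<Rightarrow> ('v set \<Rightarrow> ('v \<Rightarrow> 'a) set \<Rightarrow> 'b)
   \<Rightarrow> (('v \<Rightarrow> 'a) \<Rightarrow> ('h \<Rightarrow> 'b)) \<Rightarrow> bool" where
  "constructive_abstraction VL DomL CC DD VH DomH hv hval tau \<longleftrightarrow>
     intervariable_clustering VL CC \<and>
     intravariable_clustering DomL CC DD \<and>
     bij_betw hv CC VH \<and>
     (\<forall>C\<in>CC. bij_betw (hval C) (DD C) (DomH (hv C))) \<and>
     (\<forall>v\<in>dom_of VL DomL. tau v = constructive_tau CC DD VH hv hval v)"

definition omega_maps ::
  "(('v \<Rightarrow> 'a) \<Rightarrow> ('h \<Rightarrow> 'b)) \<Rightarrow> 'v set \<Rightarrow> ('v \<Rightarrow> 'a set) \<Rightarrow> 'v set \<Rightarrow> ('v \<Rightarrow> 'a)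
   \<Rightarrow> 'h set \<Rightarrow> ('h \<Rightarrow> 'b set) \<Rightarrow> 'h set \<Rightarrow> ('h \<Rightarrow> 'b) \<Rightarrow> bool" where
  "omega_maps tau VL DomL XL xL VH DomH XH xH \<longleftrightarrow>
     tau ` Rst VL DomL XL xL = Rst VH DomH XH xH"

end

theory Submission
  imports Defs
begin

lemma part_the:
  assumes "partition_on A P" "p \<in> P" "x \<in> p"
  shows "(THE q. q \<in> P \<and> x \<in> q) = p"
  using assms by (intro the_equality) (auto simp: partition_on_def disjoint_def)

theorem lemma4:
  fixes VL :: "'v set" and DomL :: "'v \<Rightarrow> 'a set"
    and CC :: "'v set set" and DD :: "'v set \<Rightarrow> ('v \<Rightarrow> 'a) set set"
    and VH :: "'h set" and DomH :: "'h \<Rightarrow> 'b set"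
    and hv :: "'v set \<Rightarrow> 'h" and hval :: "'v set \<Rightarrow> ('v \<Rightarrow> 'a) set \<Rightarrow> 'b"
    and tau :: "('v \<Rightarrow> 'a) \<Rightarrow> ('h \<Rightarrow> 'b)"
    and XH :: "'h set" and xH :: "'h \<Rightarrow> 'b"
  assumes nonempty_domains: "\<forall>x\<in>VL. DomL x \<noteq> {}"
    and tau: "constructive_abstraction VL DomL CC DD VH DomH hv hval tau"
    and XH: "XH \<subseteq> VH"
    and xH: "xH \<in> dom_of XH DomH"
  shows "\<exists>XL xL. (\<exists>S\<subseteq>CC. XL = \<Union>S) \<and> xL \<in> dom_of XL DomL \<and>
           omega_maps tau VL DomL XL xL VH DomH XH xH"
proof -
  from tau obtain U where U: "U \<subseteq> VL" "partition_on U CC"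
    unfolding constructive_abstraction_def intervariable_clustering_def by blast
  have intra: "\<And>C. C \<in> CC \<Longrightarrow> partition_on (PiE C DomL) (DD C)"
    using tau unfolding constructive_abstraction_def intravariable_clustering_def dom_of_def by blast
  have bhv: "bij_betw hv CC VH" using tau unfolding constructive_abstraction_def by blast
  have bhval: "\<And>C. C \<in> CC \<Longrightarrow> bij_betw (hval C) (DD C) (DomH (hv C))"
    using tau unfolding constructive_abstraction_def by blast
  have tauv: "\<And>v. v \<in> PiE VL DomL \<Longrightarrow> tau v = constructive_tau CC DD VH hv hval v"
    using tau unfolding constructive_abstraction_def dom_of_def by blast
  have UCC: "U = \<Union>CC" using U(2) by (simp add: partition_onD1)
  have CsubVL: "\<And>C. C \<in> CC \<Longrightarrow> C \<subseteq> VL" using U UCC by blast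
  define clu where "clu a = (THE C. C \<in> CC \<and> a \<in> C)" for a
  have clu: "\<And>C a. C \<in> CC \<Longrightarrow> a \<in> C \<Longrightarrow> clu a = C"
    unfolding clu_def using part_the[OF U(2)] by blast
  define cell where "cell C c = (THE D. D \<in> DD C \<and> c \<in> D)" for C c
  have cell_eq: "\<And>C D c. C \<in> CC \<Longrightarrow> D \<in> DD C \<Longrightarrow> c \<in> D \<Longrightarrow> cell C c = D"
    unfolding cell_def using part_the[OF intra] by blast
  have cell: "\<And>C c. C \<in> CC \<Longrightarrow> c \<in> PiE C DomL \<Longrightarrow> cell C c \<in> DD C"
  proof -
    fix C c assume C: "C \<in> CC" and c: "c \<in> PiE C DomL"
    then obtain D where "D \<in> DD C" "c \<in> D" using partition_onD1[OF intra[OF C]] by blast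
    then show "cell C c \<in> DD C" using cell_eq[OF C] by simp
  qed
  have DDsub: "\<And>C D. C \<in> CC \<Longrightarrow> D \<in> DD C \<Longrightarrow> D \<subseteq> PiE C DomL \<and> D \<noteq> {}"
    using intra partition_onD1 partition_onD3 by blast
  have hvC: "\<And>C. C \<in> CC \<Longrightarrow> hv C \<in> VH" using bhv bij_betwE by blast
  have invhv: "\<And>C. C \<in> CC \<Longrightarrow> inv_into CC hv (hv C) = C"
    using bhv bij_betw_inv_into_left by fastforce
  have tau_eval: "\<And>v C. v \<in> PiE VL DomL \<Longrightarrow> C \<in> CC \<Longrightarrow>
      tau v (hv C) = hval C (cell C (restrict v C))"
    using tauv hvC invhv by (simp add: constructive_tau_def tau_C_def cell_def)
  have tau_out: "\<And>v h. v \<in> PiE VL DomL \<Longrightarrow> h \<notin> VH \<Longrightarrow> tau v h = undefined"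
    using tauv by (simp add: constructive_tau_def)
  define pick where "pick w C = (SOME c. c \<in> inv_into (DD C) (hval C) (w (hv C)))"
    for w :: "'h \<Rightarrow> 'b" and C
  have pick: "\<And>w C. C \<in> CC \<Longrightarrow> w (hv C) \<in> DomH (hv C) \<Longrightarrow>
     pick w C \<in> PiE C DomL \<and> hval C (cell C (pick w C)) = w (hv C)"
  proof -
    fix w C assume C: "C \<in> CC" and w: "w (hv C) \<in> DomH (hv C)"
    let ?D = "inv_into (DD C) (hval C) (w (hv C))"
    have im: "hval C ` DD C = DomH (hv C)" using bhval[OF C] by (simp add: bij_betw_def)
    have D: "?D \<in> DD C" using w im by (metis inv_into_into)
    have hD: "hval C ?D = w (hv C)" using w im by (metis f_inv_into_f)
    have ne: "?D \<noteq> {}" "?D \<subseteq> PiE C DomL" using DDsub[OF C D] by auto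
    have m: "pick w C \<in> ?D" unfolding pick_def using ne(1) by (metis ex_in_conv someI_ex)
    show "pick w C \<in> PiE C DomL \<and> hval C (cell C (pick w C)) = w (hv C)"
      using m ne(2) cell_eq[OF C D m] hD by auto
  qed
  define build where "build q = (\<lambda>a. if a \<in> VL then (if a \<in> U then q (clu a) a
      else (SOME y. y \<in> DomL a)) else undefined)" for q :: "'v set \<Rightarrow> 'v \<Rightarrow> 'a"
  have build_dom: "\<And>q. (\<And>C. C \<in> CC \<Longrightarrow> q C \<in> PiE C DomL) \<Longrightarrow> build q \<in> PiE VL DomL"
  proof -
    fix q assume q: "\<And>C. C \<in> CC \<Longrightarrow> q C \<in> PiE C DomL"
    show "build q \<in> PiE VL DomL"
    proof (rule PiE_I)
      fix a assume a: "a \<in> VL"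
      show "build q a \<in> DomL a"
      proof (cases "a \<in> U")
        case True
        then obtain C where C: "C \<in> CC" "a \<in> C" using UCC by blast
        then show ?thesis using a True q[OF C(1)] clu[OF C] by (auto simp: build_def)
      next
        case False
        then show ?thesis using a nonempty_domains by (auto simp: build_def some_in_eq)
      qed
    qed (simp add: build_def)
  qed
  have build_restr: "\<And>q C. C \<in> CC \<Longrightarrow> q C \<in> PiE C DomL \<Longrightarrow> restrict (build q) C = q C"
  proof -
    fix q C assume C: "C \<in> CC" and q: "q C \<in> PiE C DomL"
    show "restrict (build q) C = q C"
    proof
      fix a show "restrict (build q) C a = q C a"
      proof (cases "a \<in> C")
        case True
        have "a \<in> VL" "a \<in> U" using C CsubVL[OF C] UCC True by auto
        then show ?thesis using clu[OF C True] True by (simp add: build_def)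
      next
        case False
        then show ?thesis using PiE_arb[OF q False] by simp
      qed
    qed
  qed
  have PiE_ne: "\<And>C. C \<in> CC \<Longrightarrow> PiE C DomL \<noteq> {}"
    using CsubVL nonempty_domains by (auto simp: PiE_eq_empty_iff)
  define S where "S = {C \<in> CC. hv C \<in> XH}"
  define XL where "XL = \<Union>S"
  define q0 where "q0 C = (if C \<in> S then pick xH C else (SOME c. c \<in> PiE C DomL))" for C
  have xHC: "\<And>C. C \<in> S \<Longrightarrow> xH (hv C) \<in> DomH (hv C)"
    using xH unfolding S_def dom_of_def by auto
  have q0: "\<And>C. C \<in> CC \<Longrightarrow> q0 C \<in> PiE C DomL"
  proof -
    fix C assume C: "C \<in> CC"
    show "q0 C \<in> PiE C DomL"
    proof (cases "C \<in> S")
      case True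
      then show ?thesis using pick[of C xH, OF C xHC[OF True]] by (simp add: q0_def)
    next
      case False
      obtain c where "c \<in> PiE C DomL" using PiE_ne[OF C] by blast
      then show ?thesis using False unfolding q0_def by (simp add: someI[of "\<lambda>c. c \<in> PiE C DomL"])
    qed
  qed
  define xL where "xL = restrict (build q0) XL"
  have XLsub: "XL \<subseteq> VL" using CsubVL unfolding XL_def S_def by blast
  have xLdom: "xL \<in> dom_of XL DomL"
    using build_dom[OF q0] XLsub unfolding xL_def dom_of_def by (auto simp: PiE_iff)
  have "tau ` Rst VL DomL XL xL = Rst VH DomH XH xH"
  proof
    show "tau ` Rst VL DomL XL xL \<subseteq> Rst VH DomH XH xH"
    proof
      fix y assume "y \<in> tau ` Rst VL DomL XL xL"
      then obtain v where v: "v \<in> PiE VL DomL" "\<forall>a\<in>XL. v a = xL a" "y = tau v"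
        unfolding Rst_def dom_of_def by blast
      have "tau v \<in> PiE VH DomH"
      proof (rule PiE_I)
        fix h assume h: "h \<in> VH"
        then obtain C where C: "C \<in> CC" "h = hv C" using bhv by (metis bij_betw_imp_surj_on imageE)
        have "cell C (restrict v C) \<in> DD C"
        proof (rule cell[OF C(1)])
          show "restrict v C \<in> PiE C DomL" using v(1) CsubVL[OF C(1)] by (auto simp: PiE_iff)
        qed
        then show "tau v h \<in> DomH h"
          using tau_eval[OF v(1) C(1)] C(2) bij_betwE[OF bhval[OF C(1)]] by simp
      qed (use tau_out v(1) in auto)
      moreover have "\<forall>h\<in>XH. tau v h = xH h"
      proof
        fix h assume h: "h \<in> XH"
        then obtain C where C: "C \<in> CC" "h = hv C" using bhv XH by (metis bij_betw_imp_surj_on imageE subsetD)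
        have CS: "C \<in> S" using C h S_def by auto
        have "restrict v C = restrict xL C"
          using v(2) CS unfolding XL_def by (auto intro!: ext)
        also have "\<dots> = restrict (build q0) C" using CS unfolding xL_def XL_def by (auto intro!: ext)
        also have "\<dots> = pick xH C" using build_restr[of C q0, OF C(1) q0[OF C(1)]] CS by (simp add: q0_def)
        finally show "tau v h = xH h" using tau_eval[OF v(1) C(1)] pick[of C xH, OF C(1) xHC[OF CS]] C by simp
      qed
      ultimately show "y \<in> Rst VH DomH XH xH" using v(3) unfolding Rst_def dom_of_def by blast
    qed
  next
    show "Rst VH DomH XH xH \<subseteq> tau ` Rst VL DomL XL xL"
    proof
      fix w assume "w \<in> Rst VH DomH XH xH"
      then have w: "w \<in> PiE VH DomH" "\<forall>h\<in>XH. w h = xH h" unfolding Rst_def dom_of_def by auto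
      have wC: "\<And>C. C \<in> CC \<Longrightarrow> w (hv C) \<in> DomH (hv C)" using w(1) hvC by auto
      define v where "v = build (pick w)"
      have pw: "\<And>C. C \<in> CC \<Longrightarrow> pick w C \<in> PiE C DomL" using pick wC by blast
      have vdom: "v \<in> PiE VL DomL" using build_dom pw unfolding v_def by blast
      have vagree: "\<forall>a\<in>XL. v a = xL a"
      proof
        fix a assume "a \<in> XL"
        then obtain C where C: "C \<in> S" "a \<in> C" unfolding XL_def by blast
        have CC: "C \<in> CC" using C S_def by auto
        have eqp: "pick w C = pick xH C" using C w(2) unfolding S_def pick_def by auto
        have "v a = restrict (build (pick w)) C a" using C v_def by simp
        also have "\<dots> = pick xH C a" using build_restr[of C "pick w", OF CC pw[OF CC]] eqp by simp
        also have "\<dots> = restrict (build q0) C a"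
          using build_restr[of C q0, OF CC q0[OF CC]] C by (simp add: q0_def)
        also have "\<dots> = xL a" using C unfolding xL_def XL_def by auto
        finally show "v a = xL a" .
      qed
      have "tau v = w"
      proof
        fix h show "tau v h = w h"
        proof (cases "h \<in> VH")
          case True
          then obtain C where C: "C \<in> CC" "h = hv C" using bhv by (metis bij_betw_imp_surj_on imageE)
          show ?thesis using tau_eval[OF vdom C(1)] build_restr[of C "pick w", OF C(1) pw[OF C(1)]]
              pick[of C w, OF C(1) wC[OF C(1)]] C unfolding v_def by simp
        next
          case False
          then show ?thesis using tau_out[OF vdom False] PiE_arb[OF w(1) False] by simp
        qed
      qed
      moreover have "v \<in> Rst VL DomL XL xL"
        using vdom vagree unfolding Rst_def dom_of_def by simp
      ultimately show "w \<in> tau ` Rst VL DomL XL xL"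
        by (metis image_eqI)
    qed
  qed
  then have om: "omega_maps tau VL DomL XL xL VH DomH XH xH"
    unfolding omega_maps_def .
  have "S \<subseteq> CC" unfolding S_def by blast
  then have "\<exists>S\<subseteq>CC. XL = \<Union>S" unfolding XL_def by blast
  then show ?thesis using xLdom om by blast
qed

end
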